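(* Let $G$ be a finite abelian group with $|G|>1$ which is not a cyclic group of prime power order, and let $A$ be a non-empty subset of $G$. Then there exists a subgroup $H$ of $G$ of prime order such that $$|\{a+H\in G/H:\ A\cap(a+H)\neq\emptyset\}|\geq\sqrt{|A|}.$$
   Context: For a subgroup $H$ of $G$, $G/H$ is the set of cosets $a+H$; the quantity on the left is the number of cosets of $H$ that meet $A$. *)

theory Defs
  imports "HOL-Algebra.Algebra"
begin

definition cyclic_group :: "('a, 'b) monoid_scheme \<Rightarrow> bool" where
  "cyclic_group G \<longleftrightarrow> (\<exists>g \<in> carrier G. generate G {g} = carrier G)"

end

theory Submission
  imports Defs
begin

lemma (in group) prime_subgroup_gen:
  assumes fin: "finite (carrier G)" and H: "subgroup H G" "Factorial_Ring.prime (card H)"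
    and x: "x \<in> H" "x \<noteq> \<one>"
  shows "generate G {x} = H"
proof -
  have xc: "x \<in> carrier G" using H(1) x(1) subgroup.subset by blast
  let ?K = "generate G {x}"
  have Ksub: "subgroup ?K G" using generate_is_subgroup xc by auto
  have KH: "?K \<subseteq> H" using generate_subgroup_incl[OF _ H(1)] x(1) by auto
  have "subgroup ?K (G\<lparr>carrier := H\<rparr>)" using subgroup_incl[OF Ksub H(1) KH] .
  moreover have "group (G\<lparr>carrier := H\<rparr>)" using subgroup_imp_group[OF H(1)] .
  ultimately have "card (rcosets\<^bsub>G\<lparr>carrier := H\<rparr>\<^esub> ?K) * card ?K = order (G\<lparr>carrier := H\<rparr>)"
    using group.lagrange by blast
  hence eqc: "card (rcosets\<^bsub>G\<lparr>carrier := H\<rparr>\<^esub> ?K) * card ?K = card H" by (simp add: order_def)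
  have dv: "card ?K dvd card H" by (rule dvdI[of _ _ "card (rcosets\<^bsub>G\<lparr>carrier := H\<rparr>\<^esub> ?K)"]) (simp add: eqc[symmetric] mult.commute)
  have "card ?K = ord x" using generate_pow_card[OF xc] by simp
  moreover have "ord x \<noteq> 1" using ord_eq_1[OF xc] x(2) by simp
  ultimately have "card ?K = card H" using dv H(2) by (metis prime_nat_iff)
  moreover have "finite H" using fin H(1) subgroup.subset finite_subset by blast
  ultimately show ?thesis using KH card_subset_eq by blast
qed

lemma (in group) elem_prime_ord:
  assumes fin: "finite (carrier G)" and x: "x \<in> carrier G" and q: "Factorial_Ring.prime q" "q dvd ord x"
  shows "\<exists>y\<in>carrier G. ord y = q"
proof -
  have o: "ord x \<ge> 1" using ord_ge_1[OF fin x] .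
  have q0: "q > 0" using q(1) prime_gt_0_nat by blast
  obtain k where k: "ord x = q * k" using q(2) by blast
  have k0: "k \<noteq> 0" using k o by auto
  have d: "k dvd ord x" using k by simp
  have "ord (x [^] k) = ord x div k" using ord_pow[OF x d k0] .
  also have "\<dots> = q" using k k0 by simp
  finally show ?thesis using x by blast
qed

lemma prime_power_of_factors:
  fixes n q :: nat
  assumes "n > 0" "\<And>r. Factorial_Ring.prime r \<Longrightarrow> r dvd n \<Longrightarrow> r = q"
  shows "\<exists>j. n = q ^ j"
  using assms
proof (induction n rule: less_induct)
  case (less n)
  show ?case
  proof (cases "n = 1")
    case True then show ?thesis by (metis power_0)
  next
    case False
    then obtain r where r: "Factorial_Ring.prime r" "r dvd n" using prime_factor_nat by blast
    hence rq: "r = q" using less.prems by blast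
    then obtain m where m: "n = q * m" using r by blast
    have q1: "q > 1" using r rq prime_gt_1_nat by blast
    have mpos: "m > 0" using m less.prems(1) by simp
    have "m < n" using m q1 mpos by simp
    moreover have "\<And>r. Factorial_Ring.prime r \<Longrightarrow> r dvd m \<Longrightarrow> r = q"
      using less.prems(2) m by (metis dvd_mult)
    ultimately obtain j where "m = q ^ j" using less.IH mpos by blast
    then show ?thesis using m by (metis power_Suc)
  qed
qed

lemma (in group) coset_count:
  assumes fin: "finite (carrier G)" and H1: "subgroup H1 G" and H2: "subgroup H2 G"
    and triv: "H1 \<inter> H2 \<subseteq> {\<one>}" and A: "A \<subseteq> carrier G"
  shows "card A \<le> card {C \<in> rcosets H1. C \<inter> A \<noteq> {}} * card {C \<in> rcosets H2. C \<inter> A \<noteq> {}}"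
proof -
  let ?S1 = "{C \<in> rcosets H1. C \<inter> A \<noteq> {}}"
  let ?S2 = "{C \<in> rcosets H2. C \<inter> A \<noteq> {}}"
  let ?f = "\<lambda>a. (H1 #> a, H2 #> a)"
  have fS1: "finite ?S1"
  proof -
    have "rcosets H1 \<subseteq> Pow (carrier G)" using H1 rcosets_part_G by blast
    hence "finite (rcosets H1)" using fin by (metis finite_Pow_iff finite_subset)
    thus ?thesis by (rule finite_subset[rotated]) auto
  qed
  have fS2: "finite ?S2"
  proof -
    have "rcosets H2 \<subseteq> Pow (carrier G)" using H2 rcosets_part_G by blast
    hence "finite (rcosets H2)" using fin by (metis finite_Pow_iff finite_subset)
    thus ?thesis by (rule finite_subset[rotated]) auto
  qed
  have img: "?f ` A \<subseteq> ?S1 \<times> ?S2"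
  proof
    fix p assume "p \<in> ?f ` A"
    then obtain a where a: "a \<in> A" "p = ?f a" by blast
    have ac: "a \<in> carrier G" using a A by blast
    have "H1 #> a \<in> rcosets H1" using rcosetsI[OF subgroup.subset[OF H1] ac] .
    moreover have "a \<in> H1 #> a" using rcos_self[OF ac H1] .
    moreover have "H2 #> a \<in> rcosets H2" using rcosetsI[OF subgroup.subset[OF H2] ac] .
    moreover have "a \<in> H2 #> a" using rcos_self[OF ac H2] .
    ultimately show "p \<in> ?S1 \<times> ?S2" using a by blast
  qed
  have inj: "inj_on ?f A"
  proof
    fix a b assume a: "a \<in> A" and b: "b \<in> A" and eq: "?f a = ?f b"
    have ac: "a \<in> carrier G" and bc: "b \<in> carrier G" using a b A by auto
    have "a \<in> H1 #> b" using rcos_self[OF ac H1] eq by simp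
    then obtain h where h: "h \<in> H1" "a = h \<otimes> b" unfolding r_coset_def by blast
    have "a \<in> H2 #> b" using rcos_self[OF ac H2] eq by simp
    then obtain k where k: "k \<in> H2" "a = k \<otimes> b" unfolding r_coset_def by blast
    have hc: "h \<in> carrier G" using h H1 subgroup.subset by blast
    have kc: "k \<in> carrier G" using k H2 subgroup.subset by blast
    have "h = k" using h k hc kc bc r_cancel by metis
    hence "h = \<one>" using h k triv by blast
    thus "a = b" using h bc by simp
  qed
  have "card A = card (?f ` A)" using card_image[OF inj] by simp
  also have "\<dots> \<le> card (?S1 \<times> ?S2)" using card_mono img fS1 fS2 by (meson finite_SigmaI)
  also have "\<dots> = card ?S1 * card ?S2" by (simp add: card_cartesian_product)
  finally show ?thesis .
qed

lemma (in comm_group) two_prime_subgroups: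
  assumes fin: "finite (carrier G)" and ord1: "order G > 1"
    and nc: "\<not> (cyclic_group G \<and> (\<exists>p k. Factorial_Ring.prime (p::nat) \<and> order G = p ^ k))"
  shows "\<exists>H1 H2. subgroup H1 G \<and> subgroup H2 G \<and> Factorial_Ring.prime (card H1)
           \<and> Factorial_Ring.prime (card H2) \<and> H1 \<noteq> H2"
proof (rule ccontr)
  assume uniq: "\<not> ?thesis"
  have "carrier G \<noteq> {\<one>}" using ord1 unfolding order_def by auto
  then obtain x where x: "x \<in> carrier G" "x \<noteq> \<one>" using one_closed by blast
  have "ord x \<noteq> 1" using ord_eq_1[OF x(1)] x(2) by simp
  then obtain q where q: "Factorial_Ring.prime q" "q dvd ord x" using prime_factor_nat by blast
  obtain y where y: "y \<in> carrier G" "ord y = q" using elem_prime_ord[OF fin x(1) q] by blast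
  define P where "P = generate G {y}"
  have Psub: "subgroup P G" unfolding P_def using generate_is_subgroup y(1) by auto
  have Pcard: "card P = q" unfolding P_def using generate_pow_card[OF y(1)] y(2) by simp
  have allP: "\<And>K. subgroup K G \<Longrightarrow> Factorial_Ring.prime (card K) \<Longrightarrow> K = P"
    using uniq Psub Pcard q(1) by blast
  have gen_ord: "\<And>z. z \<in> carrier G \<Longrightarrow> Factorial_Ring.prime (ord z) \<Longrightarrow> generate G {z} = P"
  proof -
    fix z assume z: "z \<in> carrier G" "Factorial_Ring.prime (ord z)"
    show "generate G {z} = P"
      using allP[of "generate G {z}"] generate_is_subgroup[of "{z}"] z generate_pow_card[OF z(1)] by auto
  qed
  have ordq: "\<And>z r. z \<in> carrier G \<Longrightarrow> Factorial_Ring.prime r \<Longrightarrow> r dvd ord z \<Longrightarrow> r = q"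
  proof -
    fix z r assume z: "z \<in> carrier G" "Factorial_Ring.prime r" "r dvd ord z"
    obtain w where w: "w \<in> carrier G" "ord w = r" using elem_prime_ord[OF fin z] by blast
    have "generate G {w} = P" using gen_ord w z(2) by simp
    thus "r = q" using generate_pow_card[OF w(1)] w(2) Pcard by simp
  qed
  have qpow: "\<And>z. z \<in> carrier G \<Longrightarrow> \<exists>j. ord z = q ^ j"
  proof -
    fix z assume z: "z \<in> carrier G"
    have "ord z > 0" using ord_ge_1[OF fin z] by simp
    thus "\<exists>j. ord z = q ^ j" using prime_power_of_factors ordq z by blast
  qed
  have q1: "q > 1" using q(1) prime_gt_1_nat by blast
  define M where "M = Max (ord ` carrier G)"
  have "M \<in> ord ` carrier G" unfolding M_def using fin one_closed by (intro Max_in) auto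
  then obtain g where g: "g \<in> carrier G" "ord g = M" by blast
  have gmax: "\<And>z. z \<in> carrier G \<Longrightarrow> ord z \<le> ord g" using g fin unfolding M_def by simp
  obtain m where m: "ord g = q ^ m" using qpow g(1) by blast
  have "ord x > 1" using ord_ge_1[OF fin x(1)] \<open>ord x \<noteq> 1\<close> by simp
  hence "q ^ m > 1" using gmax[OF x(1)] m by simp
  hence m0: "m \<noteq> 0" by (metis power_0 less_irrefl)
  define K where "K = generate G {g}"
  have Ksub: "subgroup K G" unfolding K_def using generate_is_subgroup g(1) by auto
  have Kpow: "K = {g [^] k | k. k \<in> (UNIV :: nat set)}"
    unfolding K_def using generate_pow_on_finite_carrier[OF fin g(1)] .
  have cover: "carrier G \<subseteq> K"
  proof (rule ccontr)
    assume "\<not> carrier G \<subseteq> K"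
    then obtain z0 where "z0 \<in> carrier G" "z0 \<notin> K" by blast
    then obtain h where h: "h \<in> carrier G" "h \<notin> K"
      and hmin: "\<And>z. z \<in> carrier G \<Longrightarrow> z \<notin> K \<Longrightarrow> ord h \<le> ord z"
      using ex_has_least_nat[of "\<lambda>z. z \<in> carrier G \<and> z \<notin> K" z0 ord] by blast
    obtain j where j: "ord h = q ^ j" using qpow h(1) by blast
    have "h \<noteq> \<one>" using h(2) subgroup.one_closed[OF Ksub] by auto
    hence j0: "j \<noteq> 0" using ord_eq_1[OF h(1)] j by auto
    have qdj: "q dvd q ^ j" using j0 by (simp add: dvd_power)
    have qdo: "q dvd ord h" using qdj j by simp
    have qn0: "q \<noteq> 0" using q1 by simp
    have ohq: "ord (h [^] q) = q ^ j div q" using ord_pow[OF h(1) qdo qn0] j by simp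
    have qjpos: "0 < q ^ j" using q1 by simp
    have "q ^ j div q < q ^ j" using div_less_dividend[OF q1 qjpos] .
    hence "\<not> ord h \<le> ord (h [^] q)" using ohq j by simp
    moreover have "h [^] q \<in> carrier G" using h(1) by simp
    ultimately have "h [^] q \<in> K" using hmin[of "h [^] q"] by blast
    hence "h [^] q \<in> {g [^] k | k. k \<in> (UNIV :: nat set)}" using Kpow by simp
    then obtain s :: nat where s: "h [^] q = g [^] s" by blast
    have "q ^ j \<le> q ^ m" using gmax[OF h(1)] j m by simp
    hence "j \<le> m" using q1 power_le_imp_le_exp by blast
    hence "q ^ j dvd q ^ m" by (simp add: le_imp_power_dvd)
    hence hm: "h [^] (q ^ m) = \<one>" using pow_eq_id[OF h(1)] j by simp
    obtain r :: nat where qm: "q ^ m = q * r"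
      using m0 by (metis power_eq_if)
    have rpos: "0 < r" using qm q1 by (metis gr0I mult_0_right not_one_less_zero power_not_zero zero_less_one)
    have "g [^] (s * r) = (g [^] s) [^] r" using g(1) by (simp add: nat_pow_pow)
    also have "\<dots> = (h [^] q) [^] r" using s by simp
    also have "\<dots> = h [^] (q * r)" using h(1) by (simp add: nat_pow_pow)
    also have "\<dots> = \<one>" using hm qm by simp
    finally have "ord g dvd s * r" using pow_eq_id[OF g(1)] by blast
    hence "q * r dvd s * r" using m qm by simp
    hence "q dvd s" using dvd_times_right_cancel_iff[of r q s] rpos by simp
    then obtain t :: nat where t: "s = q * t" by blast
    define h' where "h' = h \<otimes> inv (g [^] t)"
    have gt: "g [^] t \<in> carrier G" using g(1) by simp
    have h'c: "h' \<in> carrier G" unfolding h'_def using h(1) gt by simp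
    have "h' [^] q = h [^] q \<otimes> (inv (g [^] t)) [^] q"
      unfolding h'_def using pow_mult_distrib[OF m_comm[OF h(1) inv_closed[OF gt]] h(1) inv_closed[OF gt]] .
    also have "(inv (g [^] t)) [^] q = inv ((g [^] t) [^] q)" using gt nat_pow_inv by simp
    also have "(g [^] t) [^] q = g [^] s" using g(1) t by (simp add: nat_pow_pow mult.commute)
    finally have h'q: "h' [^] q = \<one>" using s g(1) by simp
    have h'K: "h' \<notin> K"
    proof
      assume "h' \<in> K"
      moreover have "g [^] t \<in> K" using Kpow by blast
      ultimately have "h' \<otimes> g [^] t \<in> K" using subgroup.m_closed[OF Ksub] by blast
      moreover have "h' \<otimes> g [^] t = h" unfolding h'_def using h(1) gt by (simp add: m_assoc)
      ultimately show False using h(2) by simp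
    qed
    hence "h' \<noteq> \<one>" using subgroup.one_closed[OF Ksub] by auto
    hence "ord h' \<noteq> 1" using ord_eq_1[OF h'c] by simp
    moreover have "ord h' dvd q" using pow_eq_id[OF h'c] h'q by simp
    ultimately have oh': "ord h' = q" using q(1) by (metis prime_nat_iff)
    have "Factorial_Ring.prime (ord h')" using q(1) by (simp only: oh')
    from gen_ord[OF h'c this] have "generate G {h'} = P" .
    have g'c: "g [^] r \<in> carrier G" using g(1) by simp
    have rd: "r dvd ord g" using m qm by simp
    have rn0: "r \<noteq> 0" using rpos by simp
    have "ord (g [^] r) = ord g div r" using ord_pow[OF g(1) rd rn0] .
    also have "\<dots> = q" using m qm rpos by simp
    finally have og': "ord (g [^] r) = q" .
    have "Factorial_Ring.prime (ord (g [^] r))" using q(1) by (simp only: og')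
    from gen_ord[OF g'c this] have "generate G {g [^] r} = P" .
    moreover have "generate G {g [^] r} \<subseteq> K"
      using generate_subgroup_incl[OF _ Ksub] Kpow by blast
    moreover have "h' \<in> generate G {h'}" by (rule generate.incl) simp
    ultimately show False using \<open>generate G {h'} = P\<close> h'K by blast
  qed
  have Kc: "K = carrier G" using cover Ksub subgroup.subset by blast
  have gK: "generate G {g} = carrier G" using Kc unfolding K_def .
  have "cyclic_group G" unfolding cyclic_group_def using g(1) gK by (intro bexI[of _ g])
  moreover have oG: "order G = q ^ m"
    using generate_pow_card[OF g(1)] m unfolding order_def gK by simp
  moreover have "\<exists>p k. Factorial_Ring.prime (p::nat) \<and> order G = p ^ k"
    using q(1) oG by (intro exI[of _ q] exI[of _ m]) simp
  ultimately show False using nc by simp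
qed

theorem mainTheorem7:
  fixes G :: "('a, 'b) monoid_scheme" and A :: "'a set"
  assumes "comm_group G"
    and "finite (carrier G)"
    and "order G > 1"
    and "\<not> (cyclic_group G \<and> (\<exists>p k. Factorial_Ring.prime (p::nat) \<and> order G = p ^ k))"
    and "A \<subseteq> carrier G" and "A \<noteq> {}"
  shows "\<exists>H. subgroup H G \<and> Factorial_Ring.prime (card H) \<and>
           real (card {C \<in> rcosets\<^bsub>G\<^esub> H. C \<inter> A \<noteq> {}}) \<ge> sqrt (real (card A))"
proof -
  interpret comm_group G by (rule assms(1))
  obtain H1 H2 where H: "subgroup H1 G" "subgroup H2 G" "Factorial_Ring.prime (card H1)"
      "Factorial_Ring.prime (card H2)" "H1 \<noteq> H2"
    using two_prime_subgroups[OF assms(2,3,4)] by blast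
  have triv: "H1 \<inter> H2 \<subseteq> {\<one>\<^bsub>G\<^esub>}"
  proof
    fix z assume z: "z \<in> H1 \<inter> H2"
    show "z \<in> {\<one>\<^bsub>G\<^esub>}"
    proof (rule ccontr)
      assume "z \<notin> {\<one>\<^bsub>G\<^esub>}"
      hence "generate G {z} = H1" "generate G {z} = H2"
        using prime_subgroup_gen[OF assms(2)] H z by auto
      thus False using H(5) by simp
    qed
  qed
  let ?n1 = "card {C \<in> rcosets\<^bsub>G\<^esub> H1. C \<inter> A \<noteq> {}}"
  let ?n2 = "card {C \<in> rcosets\<^bsub>G\<^esub> H2. C \<inter> A \<noteq> {}}"
  have le: "card A \<le> ?n1 * ?n2" using coset_count[OF assms(2) H(1,2) triv assms(5)] .
  define n1 where "n1 = ?n1"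
  define n2 where "n2 = ?n2"
  define M where "M = max n1 n2"
  have "n1 * n2 \<le> M * M" unfolding M_def by (simp add: mult_le_mono)
  hence "card A \<le> M * M" using le unfolding n1_def n2_def by linarith
  hence "real (card A) \<le> real M * real M" by (metis of_nat_le_iff of_nat_mult)
  hence "sqrt (real (card A)) \<le> sqrt (real M * real M)" using real_sqrt_le_mono by blast
  hence sq: "sqrt (real (card A)) \<le> real M" by simp
  show ?thesis
  proof (cases "n1 \<le> n2")
    case True
    hence "M = n2" unfolding M_def by simp
    thus ?thesis using H sq unfolding n2_def by blast
  next
    case False
    hence "M = n1" unfolding M_def by simp
    thus ?thesis using H sq unfolding n1_def by blast
  qed
qed

end
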